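(* Let $A$ be an $n$-by-$n$ doubly nonnegative matrix. Then there is an $\epsilon>0$ such that $(\epsilon A+I)^t$ is doubly nonnegative for all $t\ge n-2$.
   Context: A real matrix is doubly nonnegative if it is symmetric, positive semidefinite, and entry-wise nonnegative. For a positive definite matrix $B=\sum_i\mu_ix_ix_i^T$ (orthonormal eigenvectors, $\mu_i>0$) and real $t$, $B^t=\sum_i\mu_i^tx_ix_i^T$. *)

theory Defs
  imports "HOL-Analysis.Analysis"
begin

definition symmetric_matrix :: "real^'n^'n \<Rightarrow> bool" where
  "symmetric_matrix A \<longleftrightarrow> transpose A = A"

definition positive_semidefinite :: "real^'n^'n \<Rightarrow> bool" where
  "positive_semidefinite A \<longleftrightarrow> symmetric_matrix A \<and> (\<forall>x. 0 \<le> x \<bullet> (A *v x))"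

definition positive_definite :: "real^'n^'n \<Rightarrow> bool" where
  "positive_definite A \<longleftrightarrow> symmetric_matrix A \<and> (\<forall>x. x \<noteq> 0 \<longrightarrow> 0 < x \<bullet> (A *v x))"

definition doubly_nonnegative :: "real^'n^'n \<Rightarrow> bool" where
  "doubly_nonnegative A \<longleftrightarrow> symmetric_matrix A \<and> positive_semidefinite A \<and> (\<forall>i j. 0 \<le> A $ i $ j)"

definition outer :: "real^'n \<Rightarrow> real^'n^'n" where
  "outer x = (\<chi> i j. x $ i * x $ j)"

definition mat_rpow :: "real^'n^'n \<Rightarrow> real \<Rightarrow> real^'n^'n" where
  "mat_rpow B t = (SOME C. \<exists>(x :: 'n \<Rightarrow> real^'n) (\<mu> :: 'n \<Rightarrow> real).
      (\<forall>i j. x i \<bullet> x j = (if i = j then 1 else 0)) \<and>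
      (\<forall>i. 0 < \<mu> i) \<and>
      B = (\<Sum>i\<in>UNIV. \<mu> i *\<^sub>R outer (x i)) \<and>
      C = (\<Sum>i\<in>UNIV. (\<mu> i powr t) *\<^sub>R outer (x i)))"

end

theory Submission
  imports Defs
begin


lemma sym_inner:
  fixes M :: "real^'n^'n"
  assumes "transpose M = M"
  shows "x \<bullet> (M *v y) = (M *v x) \<bullet> y"
proof -
  have "x \<bullet> (M *v y) = (\<Sum>i\<in>UNIV. \<Sum>j\<in>UNIV. x$i * M$i$j * y$j)"
    by (simp add: inner_vec_def matrix_vector_mult_def sum_distrib_left mult.assoc)
  also have "\<dots> = (\<Sum>j\<in>UNIV. \<Sum>i\<in>UNIV. x$i * M$i$j * y$j)" by (rule sum.swap)
  also have "\<dots> = (M *v x) \<bullet> y"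
  proof -
    have "M$i$j = M$j$i" for i j
    proof -
      have "M$i$j = transpose M $ j $ i" by (simp add: transpose_def)
      then show ?thesis using assms by simp
    qed
    then have "(\<Sum>j\<in>UNIV. \<Sum>i\<in>UNIV. x$i * M$i$j * y$j) = (\<Sum>j\<in>UNIV. \<Sum>i\<in>UNIV. M$j$i * x$i * y$j)"
      by (intro sum.cong refl) (metis mult.commute)
    then show ?thesis
      by (simp add: inner_vec_def matrix_vector_mult_def sum_distrib_right)
  qed
  finally show ?thesis .
qed

lemma eigen_exists:
  fixes M :: "real^'n^'n"
  assumes symM: "transpose M = M" and V: "subspace V" and inv: "\<And>x. x \<in> V \<Longrightarrow> M *v x \<in> V"
    and nz: "x0 \<in> V" "x0 \<noteq> 0"
  shows "\<exists>u\<in>V. norm u = 1 \<and> M *v u = (u \<bullet> (M *v u)) *\<^sub>R u"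
proof -
  let ?S = "V \<inter> sphere 0 1"
  let ?f = "\<lambda>x. x \<bullet> (M *v x)"
  have cS: "compact ?S"
    by (metis V closed_subspace compact_Int_closed compact_sphere inf_commute)
  have "x0 /\<^sub>R norm x0 \<in> ?S" using nz V by (simp add: subspace_scale)
  hence neS: "?S \<noteq> {}" by blast
  have cf: "continuous_on ?S ?f"
    by (intro continuous_intros linear_continuous_on) (auto simp: bounded_linear_def)
  obtain u where uS: "u \<in> ?S" and umax: "\<And>y. y \<in> ?S \<Longrightarrow> ?f y \<le> ?f u"
    using continuous_attains_sup[OF cS neS cf] by blast
  define \<mu> where "\<mu> = ?f u"
  have u1: "norm u = 1" "u \<in> V" using uS by auto
  have uu: "u \<bullet> u = 1" using u1 by (simp add: norm_eq_1)
  have quad: "?f x \<le> \<mu> * (x \<bullet> x)" if "x \<in> V" for x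
  proof (cases "x = 0")
    case True then show ?thesis by simp
  next
    case False
    let ?y = "x /\<^sub>R norm x"
    have "?y \<in> ?S" using False that V by (simp add: subspace_scale)
    hence "?f ?y \<le> \<mu>" using umax \<mu>_def by blast
    moreover have "?f ?y = ?f x / (norm x)^2"
      by (simp add: matrix_vector_mult_scaleR power2_eq_square field_simps)
    moreover have "x \<bullet> x = (norm x)^2" by (simp add: power2_norm_eq_inner)
    ultimately show ?thesis using False by (simp add: divide_le_eq)
  qed
  define w where "w = \<mu> *\<^sub>R u - M *v u"
  have wV: "w \<in> V" unfolding w_def using u1 inv V by (simp add: subspace_diff subspace_scale)
  have key: "0 \<le> 2 * r * (w \<bullet> w) + r^2 * (\<mu> * (w \<bullet> w) - ?f w)" for r :: real
  proof -
    have "u + r *\<^sub>R w \<in> V" using wV u1 V by (simp add: subspace_add subspace_scale)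
    from quad[OF this]
    have "?f (u + r *\<^sub>R w) \<le> \<mu> * ((u + r *\<^sub>R w) \<bullet> (u + r *\<^sub>R w))" .
    moreover have "?f (u + r *\<^sub>R w) = ?f u + r * (u \<bullet> (M *v w)) + r * (w \<bullet> (M *v u)) + r^2 * ?f w"
      by (simp add: algebra_simps inner_add_left inner_add_right matrix_vector_mult_scaleR power2_eq_square)
    moreover have "u \<bullet> (M *v w) = w \<bullet> (M *v u)"
      using sym_inner[OF symM, of u w] by (simp add: inner_commute)
    moreover have "(u + r *\<^sub>R w) \<bullet> (u + r *\<^sub>R w) = 1 + 2 * r * (u \<bullet> w) + r^2 * (w \<bullet> w)"
      using uu by (simp add: algebra_simps inner_add_left inner_add_right power2_eq_square inner_commute)
    moreover have "w \<bullet> w = \<mu> * (u \<bullet> w) - w \<bullet> (M *v u)"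
      unfolding w_def by (simp add: inner_diff_left inner_commute)
    ultimately have H: "\<mu> + 2*r*(w \<bullet> (M *v u)) + r^2 * ?f w \<le> \<mu> * (1 + 2 * r * (u \<bullet> w) + r^2 * (w \<bullet> w))"
      and W: "w \<bullet> w = \<mu> * (u \<bullet> w) - w \<bullet> (M *v u)"
      unfolding \<mu>_def[symmetric] by simp_all
    have gen: "\<And>m q F p W'::real. m * (1 + 2*r*p + r^2*W') - (m + 2*r*q + r^2*F) = 2*r*(m*p - q) + r^2*(m*W' - F)"
      by (simp add: algebra_simps)
    from H have "0 \<le> \<mu> * (1 + 2 * r * (u \<bullet> w) + r^2 * (w \<bullet> w)) - (\<mu> + 2*r*(w \<bullet> (M *v u)) + r^2 * ?f w)"
      by simp
    also note gen
    finally show ?thesis using W by simp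
  qed
  have "w = 0"
  proof (rule ccontr)
    assume "w \<noteq> 0"
    hence wp: "0 < w \<bullet> w" by simp
    define c where "c = \<mu> * (w \<bullet> w) - ?f w"
    have c0: "0 \<le> c" using quad[OF wV] unfolding c_def by simp
    define r where "r = - (w \<bullet> w) / (c + 1)"
    have "0 \<le> 2 * r * (w \<bullet> w) + r^2 * c" using key[of r] unfolding c_def .
    moreover have "2 * r * (w \<bullet> w) + r^2 * c = (w \<bullet> w)^2 * (c / (c+1)^2 - 2/(c+1))"
      unfolding r_def using c0 by (simp add: field_simps power2_eq_square)
    moreover have "c / (c+1)^2 - 2/(c+1) < 0"
    proof -
      define d where "d = c + 1"
      have d0: "d > 0" "d \<noteq> 0" using c0 by (auto simp: d_def)
      have "c / d^2 - 2/d = (c - 2*d)/d^2" using d0 by (simp add: field_simps power2_eq_square)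
      also have "\<dots> < 0" using d0 c0 by (intro divide_neg_pos) (auto simp: d_def)
      finally show ?thesis by (simp add: d_def)
    qed
    ultimately show False using wp
      by (metis mult_pos_neg not_le zero_less_power)
  qed
  then show ?thesis using u1 unfolding w_def \<mu>_def by (metis eq_iff_diff_eq_0)
qed




lemma eigen_sets:
  fixes M :: "real^'n^'n"
  assumes symM: "transpose M = M"
  shows "k \<le> CARD('n) \<Longrightarrow> \<exists>E. finite E \<and> card E = k \<and> (\<forall>e\<in>E. norm e = 1 \<and> M *v e = (e \<bullet> (M *v e)) *\<^sub>R e)
           \<and> (\<forall>e\<in>E. \<forall>e'\<in>E. e \<noteq> e' \<longrightarrow> e \<bullet> e' = 0)"
proof (induction k)
  case 0 then show ?case by (intro exI[of _ "{}"]) auto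
next
  case (Suc k)
  then obtain E where E: "finite E" "card E = k" "\<forall>e\<in>E. norm e = 1 \<and> M *v e = (e \<bullet> (M *v e)) *\<^sub>R e"
     "\<forall>e\<in>E. \<forall>e'\<in>E. e \<noteq> e' \<longrightarrow> e \<bullet> e' = 0" by auto
  define V where "V = {y. \<forall>x\<in>E. orthogonal x y}"
  have sV: "subspace V" unfolding V_def by (rule subspace_orthogonal_to_vectors)
  have dE: "dim E < DIM(real^'n)" using dim_le_card'[OF E(1)] E(2) Suc.prems by simp
  then obtain x0 where x0: "x0 \<noteq> 0" "\<And>y. y \<in> span E \<Longrightarrow> orthogonal x0 y"
    using orthogonal_to_subspace_exists[OF dE] by blast
  have x0V: "x0 \<in> V" unfolding V_def using x0(2) span_base orthogonal_commute by blast
  have inv: "M *v x \<in> V" if "x \<in> V" for x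
    unfolding V_def
  proof (intro CollectI ballI)
    fix e assume "e \<in> E"
    then have "M *v e = (e \<bullet> (M *v e)) *\<^sub>R e" using E(3) by auto
    then have "e \<bullet> (M *v x) = ((e \<bullet> (M *v e)) *\<^sub>R e) \<bullet> x"
      using sym_inner[OF symM, of e x] by metis
    also have "\<dots> = (e \<bullet> (M *v e)) * (e \<bullet> x)" by simp
    also have "e \<bullet> x = 0" using that \<open>e \<in> E\<close> unfolding V_def orthogonal_def by auto
    finally show "orthogonal e (M *v x)" by (simp add: orthogonal_def)
  qed
  obtain u where u: "u \<in> V" "norm u = 1" "M *v u = (u \<bullet> (M *v u)) *\<^sub>R u"
    using eigen_exists[OF symM sV inv x0V x0(1)] by blast
  have uE: "u \<notin> E"
  proof
    assume "u \<in> E"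
    then have "u \<bullet> u = 0" using u(1) unfolding V_def orthogonal_def by auto
    then show False using u(2) by simp
  qed
  have orth: "\<And>e. e \<in> E \<Longrightarrow> e \<bullet> u = 0 \<and> u \<bullet> e = 0"
    using u(1) unfolding V_def orthogonal_def by (auto simp: inner_commute)
  show ?case
    apply (rule exI[of _ "insert u E"])
    using E uE u orth by auto
qed

lemma spectral:
  fixes M :: "real^'n^'n"
  assumes symM: "transpose M = M"
  shows "\<exists>y::'n \<Rightarrow> real^'n. (\<forall>i j. y i \<bullet> y j = (if i=j then 1 else 0)) \<and> (\<forall>i. M *v y i = (y i \<bullet> (M *v y i)) *\<^sub>R y i)"
proof -
  obtain E where E: "finite E" "card E = CARD('n)" "\<forall>e\<in>E. norm e = 1 \<and> M *v e = (e \<bullet> (M *v e)) *\<^sub>R e"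
     "\<forall>e\<in>E. \<forall>e'\<in>E. e \<noteq> e' \<longrightarrow> e \<bullet> e' = 0"
    using eigen_sets[OF symM, of "CARD('n)"] by auto
  obtain h where h: "bij_betw h (UNIV::'n set) E"
    using finite_same_card_bij[of "UNIV::'n set" E] E by auto
  have hE: "h i \<in> E" for i using h bij_betwE by blast
  have hinj: "h i = h j \<Longrightarrow> i = j" for i j using h by (auto simp: bij_betw_def inj_on_def)
  show ?thesis
  proof (intro exI[of _ h] conjI allI)
    fix i j show "h i \<bullet> h j = (if i=j then 1 else 0)"
    proof (cases "i = j")
      case True then show ?thesis using E(3) hE by (auto simp: norm_eq_1)
    next
      case False
      then have "h i \<noteq> h j" using hinj by blast
      then show ?thesis using E(4) hE False by auto
    qed
  next
    fix i show "M *v h i = (h i \<bullet> (M *v h i)) *\<^sub>R h i" using E(3) hE by auto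
  qed
qed

lemma completeness:
  fixes y :: "'n \<Rightarrow> real^'n"
  assumes on: "\<forall>i j. y i \<bullet> y j = (if i=j then 1 else 0)"
  shows "(\<Sum>k\<in>UNIV. y k $ i * y k $ j) = (if i = j then 1 else 0)"
proof -
  define Q :: "real^'n^'n" where "Q = (\<chi> i k. y k $ i)"
  have "transpose Q ** Q = mat 1"
    using on by (simp add: Q_def vec_eq_iff matrix_matrix_mult_def transpose_def mat_def inner_vec_def)
  then have "Q ** transpose Q = mat 1" using matrix_left_right_inverse by blast
  then have "(Q ** transpose Q) $ i $ j = mat 1 $ i $ j" by simp
  then show ?thesis by (simp add: Q_def matrix_matrix_mult_def transpose_def mat_def)
qed




lemma outer_sum_entry:
  "(\<Sum>k\<in>UNIV. f k *\<^sub>R outer (y k :: real^'n)) $ i $ j = (\<Sum>k\<in>(UNIV::'k::finite set). f k * y k $ i * y k $ j)"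
  by (simp add: sum_component outer_def mult.assoc)

lemma decomp_entry:
  fixes M :: "real^'n^'n" and y :: "'n \<Rightarrow> real^'n"
  assumes on: "\<forall>i j. y i \<bullet> y j = (if i=j then 1 else 0)" and ev: "\<And>k. M *v y k = \<mu> k *\<^sub>R y k"
  shows "M $ i $ j = (\<Sum>k\<in>UNIV. \<mu> k * y k $ i * y k $ j)"
proof -
  have "(\<Sum>k\<in>UNIV. \<mu> k * y k $ i * y k $ j) = (\<Sum>k\<in>UNIV. (\<Sum>l\<in>UNIV. M$i$l * y k $ l) * y k $ j)"
  proof (intro sum.cong refl)
    fix k
    have "(M *v y k) $ i = \<mu> k * y k $ i" using ev[of k] by simp
    then show "\<mu> k * y k $ i * y k $ j = (\<Sum>l\<in>UNIV. M$i$l * y k $ l) * y k $ j"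
      by (simp add: matrix_vector_mult_def)
  qed
  also have "\<dots> = (\<Sum>k\<in>UNIV. \<Sum>l\<in>UNIV. M$i$l * (y k $ l * y k $ j))"
    by (simp add: sum_distrib_right mult.assoc)
  also have "\<dots> = (\<Sum>l\<in>UNIV. \<Sum>k\<in>UNIV. M$i$l * (y k $ l * y k $ j))"
    by (rule sum.swap)
  also have "\<dots> = (\<Sum>l\<in>UNIV. M$i$l * (\<Sum>k\<in>UNIV. y k $ l * y k $ j))"
    by (simp add: sum_distrib_left)
  also have "\<dots> = (\<Sum>l\<in>UNIV. M$i$l * (if l = j then 1 else 0))"
    using completeness[OF on] by simp
  also have "\<dots> = M$i$j" by (simp add: if_distrib cong: if_cong)
  finally show ?thesis by simp
qed

lemma prod_lemma:
  fixes y :: "'n \<Rightarrow> real^'n"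
  assumes on: "\<forall>i j. y i \<bullet> y j = (if i=j then 1 else 0)"
  shows "(\<Sum>l\<in>UNIV. (\<Sum>k\<in>UNIV. f k * y k $ i * y k $ l) * (\<Sum>q\<in>UNIV. g q * y q $ l * y q $ j))
     = (\<Sum>k\<in>UNIV. f k * g k * y k $ i * y k $ j)"
proof -
  have "(\<Sum>l\<in>UNIV. (\<Sum>k\<in>UNIV. f k * y k $ i * y k $ l) * (\<Sum>q\<in>UNIV. g q * y q $ l * y q $ j))
     = (\<Sum>l\<in>UNIV. \<Sum>k\<in>UNIV. \<Sum>q\<in>UNIV. (f k * g q * y k $ i * y q $ j) * (y k $ l * y q $ l))"
    by (simp add: sum_product mult_ac)
  also have "\<dots> = (\<Sum>k\<in>UNIV. \<Sum>l\<in>UNIV. \<Sum>q\<in>UNIV. (f k * g q * y k $ i * y q $ j) * (y k $ l * y q $ l))"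
    by (rule sum.swap)
  also have "\<dots> = (\<Sum>k\<in>UNIV. \<Sum>q\<in>UNIV. \<Sum>l\<in>UNIV. (f k * g q * y k $ i * y q $ j) * (y k $ l * y q $ l))"
    by (intro sum.cong refl sum.swap)
  also have "\<dots> = (\<Sum>k\<in>UNIV. \<Sum>q\<in>UNIV. (f k * g q * y k $ i * y q $ j) * (y k \<bullet> y q))"
    by (simp add: inner_vec_def sum_distrib_left)
  also have "\<dots> = (\<Sum>k\<in>UNIV. f k * g k * y k $ i * y k $ j)"
    by (simp only: on[rule_format]) (simp add: if_distrib cong: if_cong)
  finally show ?thesis .
qed




lemma gchoose_Suc_ratio:
  fixes s :: real
  shows "(s gchoose Suc m) = (s gchoose m) * (s - m) / (Suc m)"
proof -
  have "(s gchoose Suc m) * fact (Suc m) = (\<Prod>i = 0..<Suc m. s - of_nat i)"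
    by (rule gbinomial_mult_fact')
  also have "\<dots> = (\<Prod>i = 0..<m. s - of_nat i) * (s - m)" by simp
  also have "\<dots> = (s gchoose m) * fact m * (s - m)" by (simp add: gbinomial_mult_fact')
  finally have e: "(s gchoose Suc m) * fact (Suc m) = (s gchoose m) * fact m * (s - m)" .
  have "fact (Suc m) = (of_nat (Suc m)) * (fact m :: real)" by simp
  then have "((s gchoose Suc m) * Suc m) * fact m = ((s gchoose m) * (s-m)) * fact m"
    using e by (simp add: mult_ac)
  then have "(s gchoose Suc m) * Suc m = (s gchoose m) * (s - m)"
    by (metis fact_nonzero mult_cancel_right)
  then show ?thesis by (simp add: field_simps)
qed

lemma gchoose_nonneg:
  fixes s :: real
  assumes "real d - 1 \<le> s"
  shows "0 \<le> s gchoose d"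
  unfolding gbinomial_prod_rev using assms
  by (intro divide_nonneg_nonneg prod_nonneg) auto

lemma gchoose_growth:
  fixes s :: real
  assumes N1: "1 \<le> N" and s: "real N - 2 \<le> s" "s \<le> real N - 1" and dm: "d \<le> m"
  shows "\<bar>s gchoose m\<bar> \<le> \<bar>s gchoose d\<bar> * real N ^ (m - d)"
  using dm
proof (induction m rule: dec_induct)
  case base then show ?case by simp
next
  case (step m)
  have r: "\<bar>s - m\<bar> \<le> real N * Suc m"
  proof -
    have "real N \<ge> 1" using N1 by simp
    then have "\<bar>s - m\<bar> \<le> real N + m" using s by (auto simp: abs_le_iff)
    also have "\<dots> \<le> real N * Suc m"
    proof -
      have "real m \<le> real N * real m" using N1 by (simp add: mult_le_cancel_right1)
      then show ?thesis by (simp add: algebra_simps)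
    qed
    finally show ?thesis .
  qed
  have "\<bar>s gchoose Suc m\<bar> = \<bar>s gchoose m\<bar> * (\<bar>s - m\<bar> / Suc m)"
    by (simp add: gchoose_Suc_ratio abs_mult abs_divide)
  also have "\<dots> \<le> \<bar>s gchoose m\<bar> * real N"
    using r by (intro mult_left_mono) (auto simp: divide_le_eq)
  also have "\<dots> \<le> \<bar>s gchoose d\<bar> * real N ^ (m - d) * real N"
    using step.IH by (intro mult_right_mono) auto
  also have "\<dots> = \<bar>s gchoose d\<bar> * real N ^ (Suc m - d)"
    using step.hyps by (simp add: Suc_diff_le)
  finally show ?case .
qed




lemma core:
  fixes c lam :: "'k::finite \<Rightarrow> real" and a :: "nat \<Rightarrow> real"
  assumes a: "\<And>m. a m = (\<Sum>k\<in>UNIV. c k * lam k ^ m)"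
  and anonneg: "\<And>m. 0 \<le> a m" and abound: "\<And>m. a m \<le> S ^ m" and S0: "0 \<le> S"
  and lamb: "\<And>k. \<bar>lam k\<bar> \<le> S"
  and reach: "(\<forall>m<N. a m = 0) \<Longrightarrow> \<forall>m. a m = 0"
  and delta: "\<And>m. m < N \<Longrightarrow> 0 < a m \<Longrightarrow> \<delta> \<le> a m"
  and N1: "1 \<le> N" and s: "real N - 2 \<le> s" "s \<le> real N - 1"
  and e: "0 < \<epsilon>" "\<epsilon> * real N * S \<le> 1/2" "2 * \<epsilon> * real N * T \<le> \<delta>" "\<And>d. d < N \<Longrightarrow> S^(Suc d) \<le> T"
  shows "0 \<le> (\<Sum>k\<in>UNIV. c k * (1 + \<epsilon> * lam k) powr s)"
proof -
  define b where "b m = (s gchoose m) * \<epsilon>^m * a m" for m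
  have NS: "\<epsilon> * S \<le> \<epsilon> * real N * S"
  proof -
    have "\<epsilon> * S * 1 \<le> \<epsilon> * S * real N" using N1 e(1) S0 by (intro mult_left_mono) auto
    then show ?thesis by (simp add: mult_ac)
  qed
  have ser: "(\<lambda>m. (s gchoose m) * (\<epsilon> * lam k)^m) sums ((1 + \<epsilon> * lam k) powr s)" for k
  proof (rule gen_binomial_real)
    have "\<bar>\<epsilon> * lam k\<bar> \<le> \<epsilon> * S" using lamb[of k] e(1) by (simp add: abs_mult)
    also have "\<dots> < 1" using NS e(2) by simp
    finally show "\<bar>\<epsilon> * lam k\<bar> < 1" .
  qed
  have "(\<lambda>m. \<Sum>k\<in>UNIV. c k * ((s gchoose m) * (\<epsilon> * lam k)^m)) sums (\<Sum>k\<in>UNIV. c k * (1 + \<epsilon>*lam k) powr s)"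
    by (intro sums_sum sums_mult ser)
  moreover have "(\<Sum>k\<in>UNIV. c k * ((s gchoose m) * (\<epsilon> * lam k)^m)) = b m" for m
    by (simp add: b_def a power_mult_distrib sum_distrib_left mult_ac)
  ultimately have bs: "b sums (\<Sum>k\<in>UNIV. c k * (1 + \<epsilon>*lam k) powr s)" by simp
  hence G: "(\<Sum>k\<in>UNIV. c k * (1 + \<epsilon>*lam k) powr s) = suminf b" and sb: "summable b"
    by (auto simp: sums_iff)
  show ?thesis
  proof (cases "\<forall>m<N. a m = 0")
    case True
    then have "\<forall>m. a m = 0" by (rule reach)
    then have "b = (\<lambda>_. 0)" by (auto simp: b_def)
    then show ?thesis using G by simp
  next
    case False
    then obtain m0 where m0: "m0 < N" "0 < a m0" using False anonneg by (metis le_less)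
    define d where "d = (LEAST m. 0 < a m)"
    have ad: "0 < a d" unfolding d_def using m0(2) by (rule LeastI)
    have "d \<le> m0" unfolding d_def using m0(2) by (rule Least_le)
    then have dN: "d < N" using m0 by simp
    have below: "a m = 0" if "m < d" for m
      using not_less_Least[OF that[unfolded d_def]] anonneg[of m] by simp
    have ade: "\<delta> \<le> a d" using delta[OF dN ad] .
    have gd: "0 \<le> s gchoose d" using s dN by (intro gchoose_nonneg) auto
    define q where "q = \<epsilon> * real N * S"
    have q0: "0 \<le> q" "q \<le> 1/2" using e(1,2) S0 by (auto simp: q_def)
    define C where "C = (s gchoose d) * \<epsilon>^d * S^d"
    have C0: "0 \<le> C" unfolding C_def using gd e(1) S0 by simp
    have tailb: "- (C * q^(Suc j)) \<le> b (j + Suc d)" for j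
    proof -
      let ?m = "j + Suc d"
      have "\<bar>b ?m\<bar> = \<bar>s gchoose ?m\<bar> * \<epsilon>^?m * a ?m"
        using anonneg[of ?m] e(1) by (simp add: b_def abs_mult)
      also have "\<dots> \<le> ((s gchoose d) * real N ^ (?m - d)) * \<epsilon>^?m * S^?m"
      proof -
        have "\<bar>s gchoose ?m\<bar> \<le> (s gchoose d) * real N ^ (?m - d)"
          using gchoose_growth[OF N1 s, of d ?m] gd by simp
        then show ?thesis using e(1) anonneg[of ?m] abound[of ?m] gd
          by (intro mult_mono) auto
      qed
      also have "\<dots> = C * q^(Suc j)"
        by (simp add: C_def q_def power_add power_mult_distrib mult_ac)
      finally show ?thesis by (simp add: abs_le_iff)
    qed
    have "(\<lambda>j. q^j) sums (1 / (1 - q))" using q0 by (intro geometric_sums) simp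
    then have "(\<lambda>j. (C * q) * q^j) sums ((C * q) * (1 / (1 - q)))" by (rule sums_mult)
    then have "(\<lambda>j. - (C * q^(Suc j))) sums (- ((C * q) * (1 / (1 - q))))"
      by (intro sums_minus) (simp add: mult_ac)
    moreover have "(\<lambda>j. b (j + Suc d)) sums (\<Sum>j. b (j + Suc d))"
      using sb by (intro summable_sums summable_ignore_initial_segment)
    ultimately have tl: "- ((C * q) * (1 / (1 - q))) \<le> (\<Sum>j. b (j + Suc d))"
      by (rule sums_le[rotated]) (rule tailb)
    have "(C * q) * (1 / (1 - q)) \<le> 2 * C * q"
    proof -
      have "1 / (1 - q) \<le> 2" using q0 by (simp add: field_simps)
      then have "(C * q) * (1 / (1 - q)) \<le> (C * q) * 2" using C0 q0 by (intro mult_left_mono) auto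
      then show ?thesis by (simp add: mult_ac)
    qed
    have split: "suminf b = (\<Sum>j. b (j + Suc d)) + (\<Sum>i<Suc d. b i)"
      by (rule suminf_split_initial_segment[OF sb])
    have "(\<Sum>i<Suc d. b i) = b d" by (simp add: below b_def)
    have bd: "(s gchoose d) * \<epsilon>^d * \<delta> \<le> b d"
      unfolding b_def using gd e(1) ade by (intro mult_left_mono) auto
    have fin: "2 * C * q \<le> (s gchoose d) * \<epsilon>^d * \<delta>"
    proof -
      have "2 * S^d * q \<le> \<delta>"
      proof -
        have "2 * S^d * q = 2 * \<epsilon> * real N * S^(Suc d)" by (simp add: q_def mult_ac)
        also have "\<dots> \<le> 2 * \<epsilon> * real N * T" using e(1) e(4)[OF dN] by (intro mult_left_mono) auto
        finally show ?thesis using e(3) by linarith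
      qed
      then have "(s gchoose d) * \<epsilon>^d * (2 * S^d * q) \<le> (s gchoose d) * \<epsilon>^d * \<delta>"
        using gd e(1) by (intro mult_left_mono) auto
      then show ?thesis by (simp add: C_def mult_ac)
    qed
    show ?thesis using G split tl \<open>(C * q) * (1 / (1 - q)) \<le> 2 * C * q\<close> \<open>(\<Sum>i<Suc d. b i) = b d\<close> bd fin
      by linarith
  qed
qed




fun apow :: "real^'n^'n \<Rightarrow> nat \<Rightarrow> real^'n^'n" where
  "apow A 0 = mat 1"
| "apow A (Suc m) = apow A m ** A"

lemma apow_Suc_entry: "apow A (Suc m) $ i $ j = (\<Sum>k\<in>UNIV. apow A m $ i $ k * A $ k $ j)"
  by (simp add: matrix_matrix_mult_def)

declare apow.simps(2)[simp del]

lemma apow_nonneg: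
  assumes "\<forall>i j. 0 \<le> A$i$j" shows "0 \<le> apow A m $ i $ j"
proof (induction m arbitrary: j)
  case 0 then show ?case by (simp add: mat_def)
next
  case (Suc m) then show ?case using assms by (simp add: apow_Suc_entry sum_nonneg)
qed

lemma apow_bound:
  assumes nn: "\<forall>i j. 0 \<le> A$i$j"
  shows "apow A m $ i $ j \<le> (\<Sum>i\<in>UNIV. \<Sum>j\<in>UNIV. A$i$j) ^ m"
proof (induction m arbitrary: j)
  case 0 then show ?case by (simp add: mat_def)
next
  case (Suc m)
  let ?S = "(\<Sum>i\<in>UNIV. \<Sum>j\<in>UNIV. A$i$j)"
  have "apow A (Suc m) $ i $ j \<le> (\<Sum>k\<in>UNIV. ?S^m * A $ k $ j)"
    unfolding apow_Suc_entry using Suc nn by (intro sum_mono mult_right_mono) auto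
  also have "\<dots> = ?S^m * (\<Sum>k\<in>UNIV. A $ k $ j)" by (simp add: sum_distrib_left)
  also have "\<dots> \<le> ?S^m * ?S"
  proof (intro mult_left_mono sum_mono)
    show "A $ k $ j \<le> (\<Sum>j\<in>UNIV. A $ k $ j)" for k using nn by (intro member_le_sum) auto
    show "0 \<le> ?S^m" using nn by (simp add: sum_nonneg)
  qed
  finally show ?case by (simp add: mult.commute)
qed

lemma reach:
  fixes A :: "real^'n^'n"
  assumes nn: "\<forall>i j. 0 \<le> A$i$j" and z: "\<forall>m<CARD('n). apow A m $ i $ j = 0"
  shows "apow A p $ i $ j = 0"
proof -
  define R where "R m = {j. \<exists>m'\<le>m. 0 < apow A m' $ i $ j}" for m
  have Rstep: "R (Suc m) = insert i {j. \<exists>k\<in>R m. 0 < A$k$j}" for m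
  proof (intro set_eqI iffI)
    fix j assume "j \<in> R (Suc m)"
    then obtain m' where m': "m' \<le> Suc m" "0 < apow A m' $ i $ j" unfolding R_def by auto
    show "j \<in> insert i {j. \<exists>k\<in>R m. 0 < A$k$j}"
    proof (cases m')
      case 0 then show ?thesis using m' by (auto simp: mat_def split: if_splits)
    next
      case (Suc m'')
      then have "0 < (\<Sum>k\<in>UNIV. apow A m'' $ i $ k * A $ k $ j)" using m' apow_Suc_entry by metis
      then obtain k where "0 < apow A m'' $ i $ k * A $ k $ j"
        by (metis (no_types, lifting) not_le sum_nonpos)
      then have "0 < apow A m'' $ i $ k" "0 < A $ k $ j"
        using apow_nonneg[OF nn, of m'' i k] nn by (auto simp: zero_less_mult_iff)
      moreover have "m'' \<le> m" using Suc m' by simp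
      ultimately show ?thesis unfolding R_def by auto
    qed
  next
    fix j assume "j \<in> insert i {j. \<exists>k\<in>R m. 0 < A$k$j}"
    then show "j \<in> R (Suc m)"
    proof
      assume "j = i" then show ?thesis unfolding R_def by (intro CollectI exI[of _ 0]) (simp add: mat_def)
    next
      assume "j \<in> {j. \<exists>k\<in>R m. 0 < A$k$j}"
      then obtain k m' where km: "m' \<le> m" "0 < apow A m' $ i $ k" "0 < A$k$j" unfolding R_def by auto
      have "0 < apow A m' $ i $ k * A$k$j" using km by simp
      also have "\<dots> \<le> (\<Sum>k\<in>UNIV. apow A m' $ i $ k * A $ k $ j)"
        using apow_nonneg[OF nn] nn by (intro member_le_sum) auto
      finally have "0 < apow A (Suc m') $ i $ j" by (simp only: apow_Suc_entry)
      then show ?thesis unfolding R_def using km(1)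
        by (intro CollectI exI[of _ "Suc m'"]) auto
    qed
  qed
  have mono: "m \<le> p \<Longrightarrow> R m \<subseteq> R p" for m p unfolding R_def using order_trans by blast
  have stab: "R p = R m" if "R (Suc m) = R m" "m \<le> p" for m p
    using that(2)
  proof (induction p rule: dec_induct)
    case base then show ?case by simp
  next
    case (step p)
    then show ?case using Rstep[of p] Rstep[of m] that(1) by simp
  qed
  have "\<exists>m<CARD('n). R (Suc m) = R m"
  proof (rule ccontr)
    assume H: "\<not> ?thesis"
    have "m \<le> CARD('n) \<Longrightarrow> Suc m \<le> card (R m)" for m
    proof (induction m)
      case 0
      have "i \<in> R 0" unfolding R_def by (auto simp: mat_def)
      then show ?case by (simp add: card_gt_0_iff[symmetric] Suc_le_eq) (auto simp: card_gt_0_iff)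
    next
      case (Suc m)
      have "R (Suc m) \<noteq> R m" using H Suc.prems by auto
      then have "R m \<subset> R (Suc m)" using mono[of m "Suc m"] by auto
      then have "card (R m) < card (R (Suc m))" by (intro psubset_card_mono) auto
      then show ?case using Suc by simp
    qed
    from this[of "CARD('n)"] have "Suc (CARD('n)) \<le> card (R (CARD('n)))" by simp
    moreover have "card (R (CARD('n))) \<le> CARD('n)" by (rule card_mono) auto
    ultimately show False by simp
  qed
  then obtain m0 where m0: "m0 < CARD('n)" "R (Suc m0) = R m0" by blast
  have jn: "j \<notin> R (CARD('n) - 1)"
  proof
    assume "j \<in> R (CARD('n) - 1)"
    then obtain m' where m': "m' \<le> CARD('n) - 1" "0 < apow A m' $ i $ j" unfolding R_def by auto
    have "0 < CARD('n)" by simp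
    then have "m' < CARD('n)" using m'(1) by arith
    then show False using z m'(2) by simp
  qed
  have "j \<notin> R p"
  proof (cases "p \<le> CARD('n) - 1")
    case True
    have "R p \<subseteq> R (CARD('n) - 1)" by (rule mono[OF True])
    then show ?thesis using jn by blast
  next
    case False
    then have "m0 \<le> p" using m0(1) by arith
    then have "R p = R m0" by (rule stab[OF m0(2)])
    moreover have "m0 \<le> CARD('n) - 1" using m0(1) by arith
    then have "R m0 \<subseteq> R (CARD('n) - 1)" by (rule mono)
    ultimately show ?thesis using jn by blast
  qed
  then show ?thesis unfolding R_def using apow_nonneg[OF nn, of p i j] by auto
qed

lemma decomp_eig:
  fixes y :: "'n \<Rightarrow> real^'n"
  assumes on: "\<forall>i j. y i \<bullet> y j = (if i=j then 1 else 0)"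
  shows "(\<Sum>j\<in>UNIV. (\<Sum>q\<in>UNIV. f q * y q $ i * y q $ j) * y k $ j) = f k * y k $ i"
proof -
  have "(\<Sum>j\<in>UNIV. (\<Sum>q\<in>UNIV. f q * y q $ i * y q $ j) * y k $ j)
      = (\<Sum>j\<in>UNIV. \<Sum>q\<in>UNIV. (f q * y q $ i) * (y q $ j * y k $ j))"
    by (simp add: sum_distrib_left sum_distrib_right mult_ac)
  also have "\<dots> = (\<Sum>q\<in>UNIV. \<Sum>j\<in>UNIV. (f q * y q $ i) * (y q $ j * y k $ j))" by (rule sum.swap)
  also have "\<dots> = (\<Sum>q\<in>UNIV. (f q * y q $ i) * (y q \<bullet> y k))"
    by (simp add: inner_vec_def sum_distrib_left)
  also have "\<dots> = f k * y k $ i"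
    by (simp only: on[rule_format]) (simp add: if_distrib cong: if_cong)
  finally show ?thesis .
qed

lemma psd_form:
  fixes y :: "'n \<Rightarrow> real^'n"
  assumes f: "\<And>k. 0 \<le> f k"
  shows "0 \<le> x \<bullet> ((\<Sum>k\<in>UNIV. f k *\<^sub>R outer (y k)) *v x)"
proof -
  have "x \<bullet> ((\<Sum>k\<in>UNIV. f k *\<^sub>R outer (y k)) *v x)
     = (\<Sum>i\<in>UNIV. \<Sum>j\<in>UNIV. \<Sum>k\<in>UNIV. f k * (x$i * y k $ i) * (y k $ j * x$j))"
    by (simp add: inner_vec_def matrix_vector_mult_def outer_sum_entry outer_def sum_distrib_left sum_distrib_right mult_ac)
  also have "\<dots> = (\<Sum>i\<in>UNIV. \<Sum>k\<in>UNIV. \<Sum>j\<in>UNIV. f k * (x$i * y k $ i) * (y k $ j * x$j))"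
    by (intro sum.cong refl sum.swap)
  also have "\<dots> = (\<Sum>k\<in>UNIV. \<Sum>i\<in>UNIV. \<Sum>j\<in>UNIV. f k * (x$i * y k $ i) * (y k $ j * x$j))"
    by (rule sum.swap)
  also have "\<dots> = (\<Sum>k\<in>UNIV. f k * (\<Sum>i\<in>UNIV. x$i * y k $ i) * (\<Sum>j\<in>UNIV. y k $ j * x$j))"
    by (simp add: sum_distrib_left sum_distrib_right mult_ac)
  also have "\<dots> = (\<Sum>k\<in>UNIV. f k * (\<Sum>i\<in>UNIV. x$i * y k $ i)^2)"
    by (simp add: power2_eq_square mult_ac)
  also have "\<dots> \<ge> 0" using f by (intro sum_nonneg) auto
  finally show ?thesis .
qed




theorem theorem5p1:
  fixes A :: "real^'n^'n"
  assumes "doubly_nonnegative A"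
  shows "\<exists>\<epsilon>>0. \<forall>t::real. t \<ge> real CARD('n) - 2 \<longrightarrow>
           doubly_nonnegative (mat_rpow (\<epsilon> *\<^sub>R A + mat 1) t)"
proof -
  have symA: "transpose A = A" and psdA: "\<And>x. 0 \<le> x \<bullet> (A *v x)" and nnA: "\<forall>i j. 0 \<le> A$i$j"
    using assms unfolding doubly_nonnegative_def positive_semidefinite_def symmetric_matrix_def by auto
  have Asym: "A$i$j = A$j$i" for i j
  proof -
    have "A$i$j = transpose A $ j $ i" by (simp add: transpose_def)
    then show ?thesis using symA by simp
  qed
  define n where "n = CARD('n)"
  have n1: "1 \<le> n" unfolding n_def by (simp add: Suc_le_eq)
  define S where "S = (\<Sum>i\<in>UNIV. \<Sum>j\<in>UNIV. A$i$j)"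
  have S0: "0 \<le> S" unfolding S_def using nnA by (simp add: sum_nonneg)
  define T where "T = (max 1 S)^n"
  have T1: "1 \<le> T" unfolding T_def by simp
  have ST: "S \<le> T"
  proof -
    have "max 1 S \<le> (max 1 S)^n" using n1 by (intro self_le_power) auto
    then show ?thesis unfolding T_def by simp
  qed
  have e4: "S^(Suc d) \<le> T" if "d < n" for d
  proof -
    have "S^(Suc d) \<le> (max 1 S)^(Suc d)" using S0 by (intro power_mono) auto
    also have "\<dots> \<le> (max 1 S)^n" using that by (intro power_increasing) auto
    finally show ?thesis unfolding T_def .
  qed
  define P where "P = {apow A m $ i $ j | m i j. m < n \<and> 0 < apow A m $ i $ j}"
  have finP: "finite P"
  proof (rule finite_subset)
    show "P \<subseteq> (\<lambda>(m,i,j). apow A m $ i $ j) ` ({..<n} \<times> UNIV \<times> UNIV)"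
    proof
      fix v assume "v \<in> P"
      then obtain m i j where "v = apow A m $ i $ j" "m < n" unfolding P_def by blast
      then show "v \<in> (\<lambda>(m,i,j). apow A m $ i $ j) ` ({..<n} \<times> UNIV \<times> UNIV)"
        by (intro rev_image_eqI[of "(m,i,j)"]) auto
    qed
  qed auto
  define \<delta> where "\<delta> = Min (insert 1 P)"
  have \<delta>0: "0 < \<delta>" unfolding \<delta>_def using finP by (subst Min_gr_iff) (auto simp: P_def)
  have \<delta>le: "\<delta> \<le> apow A m $ i $ j" if "m < n" "0 < apow A m $ i $ j" for m i j
    unfolding \<delta>_def using finP that by (intro Min_le) (auto simp: P_def)
  define \<epsilon> where "\<epsilon> = \<delta> / (2 * real n * T * (1 + \<delta>))"
  have e0: "0 < \<epsilon>" unfolding \<epsilon>_def using \<delta>0 T1 n1 by simp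
  have eT: "\<epsilon> * real n * T = \<delta> / (2 * (1 + \<delta>))"
  proof -
    have D: "2 * real n * T * (1+\<delta>) \<noteq> 0" using T1 n1 \<delta>0 by auto
    have "\<epsilon> * real n * T * (2*(1+\<delta>)) = \<delta> / (2 * real n * T * (1+\<delta>)) * (2 * real n * T * (1+\<delta>))"
      unfolding \<epsilon>_def by (simp add: mult_ac)
    also have "\<dots> = \<delta>" using D by simp
    finally have "\<epsilon> * real n * T * (2*(1+\<delta>)) = \<delta>" .
    moreover have "2*(1+\<delta>) \<noteq> 0" using \<delta>0 by simp
    ultimately show ?thesis by (simp add: eq_divide_eq)
  qed
  have e2: "\<epsilon> * real n * S \<le> 1/2"
  proof -
    have "\<epsilon> * real n * S \<le> \<epsilon> * real n * T" using ST e0 by (intro mult_left_mono) auto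
    also have "\<dots> \<le> 1/2" unfolding eT using \<delta>0 by (simp add: field_simps)
    finally show ?thesis .
  qed
  have e3: "2 * \<epsilon> * real n * T \<le> \<delta>"
  proof -
    have "2 * \<epsilon> * real n * T = 2 * (\<epsilon> * real n * T)" by simp
    also have "\<dots> = 2 * (\<delta> / (2 * (1 + \<delta>)))" by (simp only: eT)
    also have "\<dots> = \<delta> / (1 + \<delta>)" by (metis mult_divide_mult_cancel_left_if zero_neq_numeral times_divide_eq_right)
    also have "\<dots> \<le> \<delta>" using \<delta>0 by (simp add: field_simps)
    finally show ?thesis .
  qed
  show ?thesis
  proof (intro exI[of _ \<epsilon>] conjI allI impI)
    show "0 < \<epsilon>" by (rule e0)
    fix t :: real assume t: "real CARD('n) - 2 \<le> t"
    define B where "B = \<epsilon> *\<^sub>R A + mat 1"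
    have Bentry: "B$i$j = \<epsilon> * A$i$j + (if i = j then 1 else 0)" for i j
      by (simp add: B_def mat_def)
    have Bnn: "0 \<le> B$i$j" for i j using Bentry e0 nnA by simp
    have symB: "transpose B = B"
      by (simp add: vec_eq_iff transpose_def Bentry Asym)
    obtain y0 :: "'n \<Rightarrow> real^'n" where on0: "\<forall>i j. y0 i \<bullet> y0 j = (if i=j then 1 else 0)"
      and ev0: "\<forall>i. B *v y0 i = (y0 i \<bullet> (B *v y0 i)) *\<^sub>R y0 i"
      using spectral[OF symB] by blast
    define \<mu>0 where "\<mu>0 k = y0 k \<bullet> (B *v y0 k)" for k
    have \<mu>0pos: "0 < \<mu>0 k" for k
    proof -
      have "B *v y0 k = \<epsilon> *\<^sub>R (A *v y0 k) + y0 k"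
        by (simp add: B_def matrix_vector_mult_add_rdistrib scaleR_matrix_vector_assoc)
      then have "\<mu>0 k = \<epsilon> * (y0 k \<bullet> (A *v y0 k)) + 1"
        unfolding \<mu>0_def using on0 by (simp add: inner_add_right)
      then show ?thesis using psdA[of "y0 k"] e0 by (smt (verit) mult_nonneg_nonneg)
    qed
    have ex: "\<exists>(x :: 'n \<Rightarrow> real^'n) (\<mu> :: 'n \<Rightarrow> real).
      (\<forall>i j. x i \<bullet> x j = (if i = j then 1 else 0)) \<and> (\<forall>i. 0 < \<mu> i) \<and>
      B = (\<Sum>i\<in>UNIV. \<mu> i *\<^sub>R outer (x i)) \<and>
      (\<Sum>i\<in>UNIV. (\<mu> i powr t) *\<^sub>R outer (x i)) = (\<Sum>i\<in>UNIV. (\<mu> i powr t) *\<^sub>R outer (x i))"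
    proof (intro exI[of _ y0] exI[of _ \<mu>0] conjI allI)
      show "B = (\<Sum>i\<in>UNIV. \<mu>0 i *\<^sub>R outer (y0 i))"
        unfolding vec_eq_iff outer_sum_entry
        using decomp_entry[OF on0, of B \<mu>0] ev0 \<mu>0_def by auto
    qed (use on0 \<mu>0pos in auto)
    have "\<exists>C. \<exists>(x :: 'n \<Rightarrow> real^'n) (\<mu> :: 'n \<Rightarrow> real).
      (\<forall>i j. x i \<bullet> x j = (if i = j then 1 else 0)) \<and> (\<forall>i. 0 < \<mu> i) \<and>
      B = (\<Sum>i\<in>UNIV. \<mu> i *\<^sub>R outer (x i)) \<and>
      C = (\<Sum>i\<in>UNIV. (\<mu> i powr t) *\<^sub>R outer (x i))"
      using ex by blast
    from someI_ex[OF this]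
    obtain y :: "'n \<Rightarrow> real^'n" and \<mu> :: "'n \<Rightarrow> real" where on: "\<forall>i j. y i \<bullet> y j = (if i = j then 1 else 0)" and \<mu>pos: "\<And>i. 0 < \<mu> i"
      and Bdec: "B = (\<Sum>i\<in>UNIV. \<mu> i *\<^sub>R outer (y i))"
      and Cdef: "mat_rpow B t = (\<Sum>i\<in>UNIV. (\<mu> i powr t) *\<^sub>R outer (y i))"
      unfolding mat_rpow_def by blast
    have Bij: "B$i$j = (\<Sum>k\<in>UNIV. \<mu> k * y k $ i * y k $ j)" for i j
    proof -
      have "B $ i $ j = (\<Sum>k\<in>UNIV. \<mu> k *\<^sub>R outer (y k)) $ i $ j" by (simp only: Bdec)
      also have "\<dots> = (\<Sum>k\<in>UNIV. \<mu> k * y k $ i * y k $ j)" by (rule outer_sum_entry)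
      finally show ?thesis .
    qed
    define lam where "lam k = (\<mu> k - 1) / \<epsilon>" for k
    have \<mu>lam: "\<mu> k = 1 + \<epsilon> * lam k" for k unfolding lam_def using e0 by simp
    have Aij: "A$i$j = (\<Sum>k\<in>UNIV. lam k * y k $ i * y k $ j)" for i j
    proof -
      have "(\<Sum>k\<in>UNIV. lam k * y k $ i * y k $ j) = (\<Sum>k\<in>UNIV. (\<mu> k * y k $ i * y k $ j - y k $ i * y k $ j) / \<epsilon>)"
        by (intro sum.cong refl) (simp add: lam_def left_diff_distrib)
      also have "\<dots> = ((\<Sum>k\<in>UNIV. \<mu> k * y k $ i * y k $ j) - (\<Sum>k\<in>UNIV. y k $ i * y k $ j)) / \<epsilon>"
        by (simp only: sum_divide_distrib[symmetric] sum_subtractf)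
      also have "\<dots> = (B$i$j - (if i = j then 1 else 0)) / \<epsilon>"
        using Bij completeness[OF on] by simp
      also have "\<dots> = A$i$j" using Bentry e0 by simp
      finally show ?thesis by simp
    qed
    have apowdec: "apow A m $ i $ j = (\<Sum>k\<in>UNIV. lam k ^ m * y k $ i * y k $ j)" for m i j
    proof (induction m arbitrary: i j)
      case 0 then show ?case using completeness[OF on] by (simp add: mat_def)
    next
      case (Suc m)
      have "apow A (Suc m) $ i $ j = (\<Sum>l\<in>UNIV. (\<Sum>k\<in>UNIV. lam k ^ m * y k $ i * y k $ l) * (\<Sum>q\<in>UNIV. lam q * y q $ l * y q $ j))"
        unfolding apow_Suc_entry Suc Aij ..
      also have "\<dots> = (\<Sum>k\<in>UNIV. lam k ^ m * lam k * y k $ i * y k $ j)" by (rule prod_lemma[OF on])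
      finally show ?case by (simp add: mult_ac)
    qed
    have lamb: "\<bar>lam k\<bar> \<le> S" for k
    proof -
      have eig: "(\<Sum>j\<in>UNIV. A$i$j * y k $ j) = lam k * y k $ i" for i
        unfolding Aij using decomp_eig[OF on] by simp
      have lamq: "lam k = (\<Sum>i\<in>UNIV. y k $ i * (\<Sum>j\<in>UNIV. A$i$j * y k $ j))"
      proof -
        have "(\<Sum>i\<in>UNIV. y k $ i * (\<Sum>j\<in>UNIV. A$i$j * y k $ j)) = lam k * (y k \<bullet> y k)"
          unfolding eig by (simp add: inner_vec_def sum_distrib_left mult_ac)
        then show ?thesis using on by simp
      qed
      have yb: "\<bar>y k $ i\<bar> \<le> 1" for i
      proof -
        have "norm (y k) = 1" using on by (simp add: norm_eq_1)
        then show ?thesis using component_le_norm_cart[of "y k" i] by simp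
      qed
      have "\<bar>lam k\<bar> \<le> (\<Sum>i\<in>UNIV. \<bar>y k $ i * (\<Sum>j\<in>UNIV. A$i$j * y k $ j)\<bar>)"
        unfolding lamq[symmetric] by (simp only: lamq sum_abs)
      also have "\<dots> \<le> (\<Sum>i\<in>UNIV. \<Sum>j\<in>UNIV. A$i$j)"
      proof (rule sum_mono)
        fix i
        have "\<bar>y k $ i * (\<Sum>j\<in>UNIV. A$i$j * y k $ j)\<bar> = \<bar>y k $ i\<bar> * \<bar>\<Sum>j\<in>UNIV. A$i$j * y k $ j\<bar>"
          by (rule abs_mult)
        also have "\<dots> \<le> 1 * (\<Sum>j\<in>UNIV. \<bar>A$i$j * y k $ j\<bar>)"
          using yb[of i] by (intro mult_mono sum_abs) auto
        also have "\<dots> \<le> (\<Sum>j\<in>UNIV. A$i$j)"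
        proof -
          have "\<bar>A$i$j * y k $ j\<bar> \<le> A$i$j" for j
            using nnA yb[of j] by (simp add: abs_mult mult_left_le)
          then show ?thesis by (simp add: sum_mono)
        qed
        finally show "\<bar>y k $ i * (\<Sum>j\<in>UNIV. A$i$j * y k $ j)\<bar> \<le> (\<Sum>j\<in>UNIV. A$i$j)" .
      qed
      finally show ?thesis unfolding S_def .
    qed
    have Epos: "0 \<le> (\<Sum>k\<in>UNIV. \<mu> k ^ p * y k $ i * y k $ j)" for p i j
    proof (induction p arbitrary: i j)
      case 0 then show ?case using completeness[OF on] by simp
    next
      case (Suc p)
      have "(\<Sum>k\<in>UNIV. \<mu> k ^ Suc p * y k $ i * y k $ j) = (\<Sum>k\<in>UNIV. \<mu> k ^ p * \<mu> k * y k $ i * y k $ j)"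
        by (simp add: mult_ac)
      also have "\<dots> = (\<Sum>l\<in>UNIV. (\<Sum>k\<in>UNIV. \<mu> k ^ p * y k $ i * y k $ l) * (\<Sum>q\<in>UNIV. \<mu> q * y q $ l * y q $ j))"
        by (rule prod_lemma[OF on, symmetric])
      also have "\<dots> = (\<Sum>l\<in>UNIV. (\<Sum>k\<in>UNIV. \<mu> k ^ p * y k $ i * y k $ l) * B $ l $ j)"
        unfolding Bij ..
      also have "\<dots> \<ge> 0" by (rule sum_nonneg, rule mult_nonneg_nonneg, rule Suc.IH, rule Bnn)
      finally show ?case .
    qed
    have Gpos: "0 \<le> (\<Sum>k\<in>UNIV. (y k $ l * y k $ j) * (1 + \<epsilon> * lam k) powr s)"
      if s: "real n - 2 \<le> s" "s \<le> real n - 1" for s l j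
    proof (rule core[where a = "\<lambda>m. apow A m $ l $ j" and S = S and N = n and \<delta> = \<delta> and T = T])
      show "apow A m $ l $ j = (\<Sum>k\<in>UNIV. y k $ l * y k $ j * lam k ^ m)" for m
        unfolding apowdec by (simp add: mult_ac)
      show "0 \<le> apow A m $ l $ j" for m by (rule apow_nonneg[OF nnA])
      show "apow A m $ l $ j \<le> S ^ m" for m unfolding S_def by (rule apow_bound[OF nnA])
      show "(\<forall>m<n. apow A m $ l $ j = 0) \<Longrightarrow> \<forall>m. apow A m $ l $ j = 0"
        using reach[OF nnA] unfolding n_def by blast
    qed (use S0 lamb \<delta>le n1 s e0 e2 e3 e4 in auto)
    have Cij: "mat_rpow B t $ i $ j = (\<Sum>k\<in>UNIV. \<mu> k powr t * y k $ i * y k $ j)" for i j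
      unfolding Cdef outer_sum_entry ..
    show "doubly_nonnegative (mat_rpow (\<epsilon> *\<^sub>R A + mat 1) t)"
      unfolding B_def[symmetric] doubly_nonnegative_def positive_semidefinite_def symmetric_matrix_def
    proof (intro conjI allI)
      show sC: "transpose (mat_rpow B t) = mat_rpow B t"
        by (simp add: vec_eq_iff transpose_def Cij mult_ac)
      then show "transpose (mat_rpow B t) = mat_rpow B t" .
      fix x show "0 \<le> x \<bullet> (mat_rpow B t *v x)"
        unfolding Cdef using \<mu>pos by (intro psd_form) auto
    next
      fix i j
      define p where "p = nat \<lfloor>t - (real n - 2)\<rfloor>"
      define s where "s = t - real p"
      have tn: "0 \<le> t - (real n - 2)" using t n_def by simp
      have rp: "real p = of_int \<lfloor>t - (real n - 2)\<rfloor>" unfolding p_def using tn by simp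
      have s1: "real n - 2 \<le> s" unfolding s_def rp using of_int_floor_le[of "t - (real n - 2)"] by linarith
      have s2: "s \<le> real n - 1" unfolding s_def rp using real_of_int_floor_add_one_gt[of "t - (real n - 2)"] by linarith
      have pw: "\<mu> k powr t = \<mu> k ^ p * \<mu> k powr s" for k
      proof -
        have "\<mu> k powr t = \<mu> k powr (real p + s)" unfolding s_def by simp
        also have "\<dots> = \<mu> k ^ p * \<mu> k powr s" using \<mu>pos[of k] by (simp add: powr_add powr_realpow)
        finally show ?thesis .
      qed
      have "mat_rpow B t $ i $ j = (\<Sum>k\<in>UNIV. \<mu> k ^ p * \<mu> k powr s * y k $ i * y k $ j)"
        unfolding Cij pw ..
      also have "\<dots> = (\<Sum>l\<in>UNIV. (\<Sum>k\<in>UNIV. \<mu> k ^ p * y k $ i * y k $ l) * (\<Sum>q\<in>UNIV. \<mu> q powr s * y q $ l * y q $ j))"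
        by (rule prod_lemma[OF on, symmetric])
      also have "\<dots> \<ge> 0"
      proof (rule sum_nonneg, rule mult_nonneg_nonneg)
        fix l
        show "0 \<le> (\<Sum>k\<in>UNIV. \<mu> k ^ p * y k $ i * y k $ l)" by (rule Epos)
        have "(\<Sum>q\<in>UNIV. \<mu> q powr s * y q $ l * y q $ j) = (\<Sum>k\<in>UNIV. (y k $ l * y k $ j) * (1 + \<epsilon> * lam k) powr s)"
          unfolding \<mu>lam by (simp add: mult_ac)
        then show "0 \<le> (\<Sum>q\<in>UNIV. \<mu> q powr s * y q $ l * y q $ j)" using Gpos[OF s1 s2] by simp
      qed
      finally show "0 \<le> mat_rpow B t $ i $ j" .
    qed
  qed
qed


end
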